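(* Let $V$ be a finite-dimensional $\Bbbk$-vector space and $\lambda$ a partition. The map $\mathrm{ad}\colon V\otimes\mathbb S_\lambda(V)\to\mathbb S_\lambda(\mathsf L_{(2)})$ induced by the Lie bracket is injective whenever $\lambda$ has at least two parts; when $\lambda=(n)$ with $n\ge1$, its kernel is isomorphic to $\mathbb S_{(n+1)}(V)=\mathrm{Sym}^{n+1}(V)$.
   Context: $\Bbbk$ is a field of characteristic $0$. $\mathsf L_{(2)}=V\oplus\bigwedge^2V$ is the free nilpotent Lie algebra of class $2$ on $V$. $\mathbb S_\lambda$ is the Schur functor; $\mathbb S_\lambda(V)\subset\mathbb S_\lambda(\mathsf L_{(2)})$ via $V\subset\mathsf L_{(2)}$, and $\mathsf L_{(2)}$ acts on $\mathbb S_\lambda(\mathsf L_{(2)})$ by functoriality from the adjoint action (so $X\in V$ acts as a derivation extending $Y\mapsto[X,Y]$); $\mathrm{ad}(X\otimes f)$ is the action of $X$ on $f$. *)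

theory Defs
  imports Main "HOL-Combinatorics.Permutations"
begin

text \<open>V = k^d with basis indexed by {..<d};
  L_(2) = V (+) Lambda^2 V with basis LV i (i<d) and LW i j = e_i wedge e_j (i<j<d).
  A tensor in W^{(x)m} (W with basis indexed by B) is a function on words (lists)
  over B of length m, vanishing on all other lists.\<close>

definition words :: "'b set \<Rightarrow> nat \<Rightarrow> 'b list set" where
  "words B m = {w. length w = m \<and> set w \<subseteq> B}"

definition tensors :: "'b set \<Rightarrow> nat \<Rightarrow> ('b list \<Rightarrow> 'k::zero) set" where
  "tensors B m = {T. \<forall>w. w \<notin> words B m \<longrightarrow> T w = 0}"

definition smul :: "'k::times \<Rightarrow> ('b list \<Rightarrow> 'k) \<Rightarrow> ('b list \<Rightarrow> 'k)" where
  "smul c T = (\<lambda>w. c * T w)"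

definition is_partition :: "nat list \<Rightarrow> bool" where
  "is_partition lam \<longleftrightarrow> sorted_wrt (\<ge>) lam \<and> 0 \<notin> set lam"

text \<open>Standard filling of the Young diagram of lam: positions 0..n-1 row by row.\<close>
definition rowof :: "nat list \<Rightarrow> nat \<Rightarrow> nat" where
  "rowof lam p = (LEAST r. p < sum_list (take (Suc r) lam))"

definition colof :: "nat list \<Rightarrow> nat \<Rightarrow> nat" where
  "colof lam p = p - sum_list (take (rowof lam p) lam)"

definition row_group :: "nat list \<Rightarrow> (nat \<Rightarrow> nat) set" where
  "row_group lam = {s. s permutes {..<sum_list lam} \<and>
      (\<forall>p<sum_list lam. rowof lam (s p) = rowof lam p)}"

definition col_group :: "nat list \<Rightarrow> (nat \<Rightarrow> nat) set" where
  "col_group lam = {s. s permutes {..<sum_list lam} \<and>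
      (\<forall>p<sum_list lam. colof lam (s p) = colof lam p)}"

definition pact :: "(nat \<Rightarrow> nat) \<Rightarrow> ('b list \<Rightarrow> 'k) \<Rightarrow> ('b list \<Rightarrow> 'k)" where
  "pact s T = (\<lambda>w. T (map (\<lambda>i. w ! s i) [0..<length w]))"

definition young_sym :: "nat list \<Rightarrow> ('b list \<Rightarrow> 'k::comm_ring_1) \<Rightarrow> ('b list \<Rightarrow> 'k)" where
  "young_sym lam T = (\<lambda>w. \<Sum>p\<in>row_group lam. \<Sum>q\<in>col_group lam.
       of_int (sign q) * pact p (pact q T) w)"

definition schur :: "'b set \<Rightarrow> nat list \<Rightarrow> ('b list \<Rightarrow> 'k::comm_ring_1) set" where
  "schur B lam = young_sym lam ` tensors B (sum_list lam)"

datatype lb = LV nat | LW nat nat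

definition Lbasis :: "nat \<Rightarrow> lb set" where
  "Lbasis d = LV ` {..<d} \<union> {LW i j | i j. i < j \<and> j < d}"

fun unLV :: "lb \<Rightarrow> nat" where
  "unLV (LV i) = i" | "unLV (LW i j) = 0"

definition emb :: "(nat list \<Rightarrow> 'k::zero) \<Rightarrow> (lb list \<Rightarrow> 'k)" where
  "emb T = (\<lambda>w. if set w \<subseteq> range LV then T (map unLV w) else 0)"

text \<open>adc x c b = coefficient of basis vector c in [x, b] (x in V, b a basis vector of L).\<close>
fun adc :: "(nat \<Rightarrow> 'k::comm_ring_1) \<Rightarrow> lb \<Rightarrow> lb \<Rightarrow> 'k" where
  "adc x (LW i j) (LV b) = (if b = j then x i else if b = i then - x j else 0)"
| "adc x (LW i j) (LW a b) = 0"
| "adc x (LV i) b = 0"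

text \<open>Action of x in V on L^{(x)m} by functoriality from the adjoint action
  (derivation extending Y \<mapsto> [x,Y]).\<close>
definition lie_act :: "nat \<Rightarrow> (nat \<Rightarrow> 'k::comm_ring_1) \<Rightarrow> (lb list \<Rightarrow> 'k) \<Rightarrow> (lb list \<Rightarrow> 'k)" where
  "lie_act d x T = (\<lambda>w. if w \<in> words (Lbasis d) (length w) then
      (\<Sum>p<length w. \<Sum>b\<in>Lbasis d. adc x (w ! p) b * T (w[p := b])) else 0)"

definition slice :: "(nat list \<Rightarrow> 'k) \<Rightarrow> nat \<Rightarrow> (nat list \<Rightarrow> 'k)" where
  "slice T a = (\<lambda>u. T (a # u))"

definition unitv :: "nat \<Rightarrow> nat \<Rightarrow> 'k::zero_neq_one" where
  "unitv a = (\<lambda>i. if i = a then 1 else 0)"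

text \<open>V (x) V^{(x)n}: words of length n+1, first letter is the V factor.
  V (x) S_lam(V): all slices lie in S_lam(V).\<close>
definition VtensS :: "nat \<Rightarrow> nat list \<Rightarrow> (nat list \<Rightarrow> 'k::comm_ring_1) set" where
  "VtensS d lam = {T \<in> tensors {..<d} (Suc (sum_list lam)).
       \<forall>a<d. slice T a \<in> schur {..<d} lam}"

text \<open>ad(X (x) f) = action of X on f; extended linearly: sum over basis e_a of V.\<close>
definition ad :: "nat \<Rightarrow> (nat list \<Rightarrow> 'k::comm_ring_1) \<Rightarrow> (lb list \<Rightarrow> 'k)" where
  "ad d T = (\<lambda>w. \<Sum>a<d. lie_act d (unitv a) (emb (slice T a)) w)"

definition GLm :: "nat \<Rightarrow> (nat \<Rightarrow> nat \<Rightarrow> 'k::comm_ring_1) set" where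
  "GLm d = {g. \<exists>h. \<forall>i<d. \<forall>j<d.
      (\<Sum>k<d. g i k * h k j) = (if i = j then 1 else 0) \<and>
      (\<Sum>k<d. h i k * g k j) = (if i = j then 1 else 0)}"

definition gl_act :: "nat \<Rightarrow> (nat \<Rightarrow> nat \<Rightarrow> 'k::comm_ring_1) \<Rightarrow> (nat list \<Rightarrow> 'k) \<Rightarrow> (nat list \<Rightarrow> 'k)" where
  "gl_act d g T = (\<lambda>w. if w \<in> words {..<d} (length w) then
      (\<Sum>u\<in>words {..<d} (length w). (\<Prod>p<length w. g (w ! p) (u ! p)) * T u) else 0)"

definition linear_on :: "('a list \<Rightarrow> 'k::comm_ring_1) set \<Rightarrow>
    (('a list \<Rightarrow> 'k) \<Rightarrow> ('b list \<Rightarrow> 'k)) \<Rightarrow> bool" where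
  "linear_on A f \<longleftrightarrow> (\<forall>x\<in>A. \<forall>y\<in>A. f (\<lambda>w. x w + y w) = (\<lambda>w. f x w + f y w)) \<and>
      (\<forall>c. \<forall>x\<in>A. f (smul c x) = smul c (f x))"

end

theory Submission
  imports Defs
begin


lemma pact_pl: "pact s T v = T (permute_list s v)"
  by (simp add: pact_def permute_list_def)

lemma perm_inv:
  assumes H: "\<And>w a b. length w = N \<Longrightarrow> a < N \<Longrightarrow> b < N \<Longrightarrow>
      S (permute_list (Transposition.transpose a b) w) = S w"
  and tau: "\<tau> permutes {..<N}" and lw: "length w = N"
  shows "S (permute_list \<tau> w) = S w"
proof -
  have "\<forall>w. length w = N \<longrightarrow> S (permute_list \<tau> w) = S w"
    using tau finite_lessThan
  proof (induct rule: permutes_induct)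
    case id
    then show ?case by simp
  next
    case (swap a b p)
    show ?case
    proof (intro allI impI)
      fix w :: "'a list" assume l: "length w = N"
      have "permute_list (Transposition.transpose a b \<circ> p) w
          = permute_list p (permute_list (Transposition.transpose a b) w)"
        using swap(5) l by (simp add: permute_list_compose)
      also have "S \<dots> = S (permute_list (Transposition.transpose a b) w)"
        using swap(4) l by simp
      also have "\<dots> = S w" using H l swap(1,2) by simp
      finally show "S (permute_list (Transposition.transpose a b \<circ> p) w) = S w" .
    qed
  qed
  thus ?thesis using lw by blast
qed

lemma sum_perm_reindex:
  assumes s: "\<sigma> permutes {..<N}"
  shows "(\<Sum>\<tau>\<in>{\<tau>. \<tau> permutes {..<N}}. f (\<tau> \<circ> \<sigma>)) = (\<Sum>\<tau>\<in>{\<tau>. \<tau> permutes {..<N}}. f \<tau>)"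
proof (rule sum.reindex_bij_witness[where i="\<lambda>\<tau>. \<tau> \<circ> inv \<sigma>" and j="\<lambda>\<tau>. \<tau> \<circ> \<sigma>"])
  have a: "inv \<sigma> \<circ> \<sigma> = id" "\<sigma> \<circ> inv \<sigma> = id"
    using s permutes_inv_o by auto
  fix \<tau> assume t: "\<tau> \<in> {\<tau>. \<tau> permutes {..<N}}"
  show "\<tau> \<circ> \<sigma> \<circ> inv \<sigma> = \<tau>" using a by (simp add: o_assoc[symmetric])
  show "\<tau> \<circ> inv \<sigma> \<circ> \<sigma> = \<tau>" using a by (simp add: o_assoc[symmetric])
  show "\<tau> \<circ> \<sigma> \<in> {\<tau>. \<tau> permutes {..<N}}" using t s by (simp add: permutes_compose)
  show "\<tau> \<circ> inv \<sigma> \<in> {\<tau>. \<tau> permutes {..<N}}" using t s by (simp add: permutes_compose permutes_inv)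
qed simp

lemma col_sign_sum:
  assumes P: "is_partition lam" and L: "2 \<le> length lam"
  shows "(\<Sum>q\<in>col_group lam. sign q) = (0::int)"
proof -
  obtain a b rest where lam: "lam = a # b # rest"
    using L by (cases lam; cases "tl lam") auto
  have a0: "a > 0" and b0: "b > 0" using P lam unfolding is_partition_def
    by (auto intro: Nat.gr0I)
  define N where "N = sum_list lam"
  have aN: "a < N" using b0 by (simp add: N_def lam)
  have r0: "rowof lam 0 = 0" unfolding rowof_def using a0 lam
    by (intro Least_eq_0) simp
  have c0: "colof lam 0 = 0" by (simp add: colof_def)
  have r1: "rowof lam a = 1" unfolding rowof_def
  proof (rule Least_equality)
    show "a < sum_list (take (Suc 1) lam)" using b0 by (simp add: lam)
    fix y assume "a < sum_list (take (Suc y) lam)"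
    thus "1 \<le> y" by (cases y) (auto simp: lam)
  qed
  have ca: "colof lam a = 0" unfolding colof_def r1 by (simp add: lam)
  define t where "t = Transposition.transpose 0 a"
  have tp: "t permutes {..<N}" unfolding t_def using aN a0
    by (intro permutes_swap_id) auto
  have tc: "colof lam (t x) = colof lam x" for x
    unfolding t_def transpose_def using c0 ca by auto
  have st: "sign t = -1" using a0 by (simp add: t_def sign_swap_id)
  have fin: "finite (col_group lam)"
    by (rule finite_subset[OF _ finite_permutations[OF finite_lessThan[of N]]])
       (auto simp: col_group_def N_def)
  have cl: "t \<circ> q \<in> col_group lam" if "q \<in> col_group lam" for q
    using that tp tc by (auto simp: col_group_def N_def permutes_compose)
  have tt: "t \<circ> (t \<circ> q) = q" for q by (simp add: t_def fun_eq_iff)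
  have "(\<Sum>q\<in>col_group lam. sign q) = (\<Sum>q\<in>col_group lam. sign (t \<circ> q))"
  proof (rule sum.reindex_bij_witness[where i="\<lambda>q. t \<circ> q" and j="\<lambda>q. t \<circ> q"])
    fix q assume "q \<in> col_group lam"
    show "t \<circ> (t \<circ> q) = q" by (simp add: t_def fun_eq_iff)
    show "t \<circ> q \<in> col_group lam" by (rule cl) fact
    show "sign (t \<circ> (t \<circ> q)) = sign q" by (simp add: tt)
  qed (auto simp: tt cl)
  also have "\<dots> = (\<Sum>q\<in>col_group lam. - sign q)"
  proof (rule sum.cong[OF refl])
    fix q assume "q \<in> col_group lam"
    hence "q permutes {..<N}" by (simp add: col_group_def N_def)
    hence "permutation q" by (auto intro: permutes_imp_permutation)
    moreover have "permutation t" using tp by (auto intro: permutes_imp_permutation)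
    ultimately show "sign (t \<circ> q) = - sign q" by (simp add: sign_compose st)
  qed
  also have "\<dots> = - (\<Sum>q\<in>col_group lam. sign q)" by (simp add: sum_negf)
  finally show ?thesis by simp
qed

lemma young_sum_zero:
  fixes X :: "'b list \<Rightarrow> 'k::comm_ring_1"
  assumes P: "is_partition lam" and L: "2 \<le> length lam" and lw: "length w = sum_list lam"
  shows "(\<Sum>\<tau>\<in>{\<tau>. \<tau> permutes {..<sum_list lam}}. young_sym lam X (permute_list \<tau> w)) = 0"
proof -
  define N where "N = sum_list lam"
  define K where "K = (\<Sum>\<tau>\<in>{\<tau>. \<tau> permutes {..<N}}. X (permute_list \<tau> w))"
  have inner: "(\<Sum>\<tau>\<in>{\<tau>. \<tau> permutes {..<N}}. pact p (pact q X) (permute_list \<tau> w)) = K"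
    if p: "p \<in> row_group lam" and q: "q \<in> col_group lam" for p q
  proof -
    have pp: "p permutes {..<N}" using p by (simp add: row_group_def N_def)
    have qp: "q permutes {..<N}" using q by (simp add: col_group_def N_def)
    have "pact p (pact q X) (permute_list \<tau> w) = X (permute_list (\<tau> \<circ> (p \<circ> q)) w)"
      if "\<tau> permutes {..<N}" for \<tau>
      using pp qp lw by (simp add: pact_pl permute_list_compose permutes_compose N_def)
    hence "(\<Sum>\<tau>\<in>{\<tau>. \<tau> permutes {..<N}}. pact p (pact q X) (permute_list \<tau> w))
        = (\<Sum>\<tau>\<in>{\<tau>. \<tau> permutes {..<N}}. X (permute_list (\<tau> \<circ> (p \<circ> q)) w))"
      by (intro sum.cong) auto
    also have "\<dots> = K" unfolding K_def
      by (rule sum_perm_reindex[where f="\<lambda>\<tau>. X (permute_list \<tau> w)"]) (simp add: pp qp permutes_compose)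
    finally show ?thesis .
  qed
  have "(\<Sum>\<tau>\<in>{\<tau>. \<tau> permutes {..<N}}. young_sym lam X (permute_list \<tau> w))
      = (\<Sum>p\<in>row_group lam. \<Sum>q\<in>col_group lam. \<Sum>\<tau>\<in>{\<tau>. \<tau> permutes {..<N}}.
           of_int (sign q) * pact p (pact q X) (permute_list \<tau> w))"
    unfolding young_sym_def
    by (subst sum.swap, rule sum.cong[OF refl], subst sum.swap, rule refl)
  also have "\<dots> = (\<Sum>p\<in>row_group lam. \<Sum>q\<in>col_group lam. of_int (sign q) * K)"
    by (intro sum.cong refl) (simp add: sum_distrib_left[symmetric] inner)
  also have "\<dots> = (\<Sum>p\<in>row_group lam. of_int (\<Sum>q\<in>col_group lam. sign q) * K)"
    by (simp add: sum_distrib_right)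
  also have "\<dots> = 0" using col_sign_sum[OF P L] by simp
  finally show ?thesis by (simp add: N_def)
qed



lemma adc_LW: "i \<noteq> j \<Longrightarrow> adc x (LW i j) b =
   (if b = LV j then x i else 0) + (if b = LV i then - x j else 0)"
  by (cases b) auto

lemma finite_Lbasis: "finite (Lbasis d)"
proof -
  have "{LW i j | i j. i < j \<and> j < d} \<subseteq> (\<lambda>(i,j). LW i j) ` ({..<d} \<times> {..<d})" by auto
  hence "finite {LW i j | i j. i < j \<and> j < d}" by (rule finite_subset) auto
  thus ?thesis by (simp add: Lbasis_def)
qed

definition inner :: "nat \<Rightarrow> (nat list \<Rightarrow> 'k::comm_ring_1) \<Rightarrow> lb list \<Rightarrow> nat \<Rightarrow> 'k" where
  "inner d T w q = (\<Sum>a<d. \<Sum>b\<in>Lbasis d. adc (unitv a) (w!q) b * emb (slice T a) (w[q:=b]))"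

lemma ad_expand: "ad d T w = (if w \<in> words (Lbasis d) (length w) then (\<Sum>q<length w. inner d T w q) else 0)"
  unfolding ad_def lie_act_def inner_def
  by (simp add: sum.swap[of _ "{..<d}"])

lemma inner_LV: "w!q = LV k \<Longrightarrow> inner d T w q = 0"
  by (simp add: inner_def)

lemma inner_LW:
  assumes "w!q = LW i j" "i \<noteq> j" "i < d" "j < d"
  shows "inner d T w q = emb (slice T i) (w[q:=LV j]) - emb (slice T j) (w[q:=LV i])"
proof -
  have LVin: "LV i \<in> Lbasis d" "LV j \<in> Lbasis d" using assms by (auto simp: Lbasis_def)
  have "inner d T w q = (\<Sum>a<d. unitv a i * emb (slice T a) (w[q:=LV j])
        - unitv a j * emb (slice T a) (w[q:=LV i]))"
    unfolding inner_def assms(1) adc_LW[OF assms(2)]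
    by (rule sum.cong[OF refl])
       (simp add: distrib_right sum.distrib finite_Lbasis LVin if_distrib[of "\<lambda>x. x * _"] cong: if_cong)
  also have "\<dots> = emb (slice T i) (w[q:=LV j]) - emb (slice T j) (w[q:=LV i])"
    using assms by (simp add: sum_subtractf unitv_def if_distrib[of "\<lambda>x. x * _"] cong: if_cong)
  finally show ?thesis .
qed

lemma emb_update:
  assumes "q < length w"
  shows "emb S (w[q:=LV j]) = (if \<forall>k<length w. k \<noteq> q \<longrightarrow> w!k \<in> range LV
           then S ((map unLV w)[q:=j]) else 0)"
proof -
  have "set (w[q:=LV j]) \<subseteq> range LV \<longleftrightarrow> (\<forall>k<length w. k \<noteq> q \<longrightarrow> w!k \<in> range LV)"
    using assms by (auto simp: set_conv_nth nth_list_update)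
  moreover have "map unLV (w[q:=LV j]) = (map unLV w)[q:=j]" by (simp add: map_update)
  ultimately show ?thesis unfolding emb_def by presburger
qed



lemma ad_special:
  assumes "i < j" "j < d" "v \<in> words {..<d} n" "p < n"
  shows "ad d T ((map LV v)[p := LW i j]) = T (i # v[p:=j]) - T (j # v[p:=i])"
proof -
  define w where "w = (map LV v)[p := LW i j]"
  have lv: "length v = n" "set v \<subseteq> {..<d}" using assms(3) by (auto simp: words_def)
  have lw: "length w = n" using lv by (simp add: w_def)
  have wp: "w!p = LW i j" using lv assms by (simp add: w_def)
  have wk: "w!k = LV (v!k)" if "k < n" "k \<noteq> p" for k using that lv by (simp add: w_def)
  have inw: "w \<in> words (Lbasis d) (length w)"
    unfolding words_def
  proof (safe)
    fix x assume "x \<in> set w"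
    then obtain k where k: "k < n" "x = w!k" using lw by (auto simp: set_conv_nth)
    show "x \<in> Lbasis d"
    proof (cases "k = p")
      case True thus ?thesis using k wp assms by (auto simp: Lbasis_def)
    next
      case False
      have "v!k \<in> set v" using k lv by simp
      hence "v!k < d" using lv by blast
      thus ?thesis using k wk False by (auto simp: Lbasis_def)
    qed
  qed
  have "(\<Sum>q<length w. inner d T w q) = (\<Sum>q<n. if q = p then inner d T w p else 0)"
    using lw by (intro sum.cong) (auto simp: wk inner_LV)
  also have "\<dots> = inner d T w p" using assms by simp
  also have "\<dots> = emb (slice T i) (w[p:=LV j]) - emb (slice T j) (w[p:=LV i])"
    using inner_LW[OF wp] assms by simp
  also have "\<dots> = T (i # v[p:=j]) - T (j # v[p:=i])"
  proof -
    have "map unLV w = v[p := 0]" using lv by (simp add: w_def map_update comp_def)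
    moreover have "map unLV (map LV v) = v" by (simp add: comp_def)
    ultimately show ?thesis using lw assms
      by (simp add: emb_update wk slice_def)
  qed
  finally show ?thesis using inw by (simp add: ad_expand w_def)
qed

lemma rel_ext:
  fixes D :: "nat list \<Rightarrow> 'k::zero" and d n :: nat
  assumes Z: "\<forall>w. w \<notin> words {..<d} (Suc n) \<longrightarrow> D w = 0"
  and R: "\<And>i j v p. i<j \<Longrightarrow> j<d \<Longrightarrow> v \<in> words {..<d} n \<Longrightarrow> p<n \<Longrightarrow>
             D (i # v[p:=j]) = D (j # v[p:=i])"
  and p: "p < length v"
  shows "D (a#v) = D (v!p # v[p:=a])"
proof (cases "length v = n \<and> a < d \<and> set v \<subseteq> {..<d}")
  case True
  hence vw: "v \<in> words {..<d} n" by (simp add: words_def)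
  have "v!p \<in> set v" by (rule nth_mem[OF p])
  hence vp: "v!p < d" using True by auto
  consider "a < v!p" | "a = v!p" | "v!p < a" by (cases a "v!p" rule: linorder_cases) auto
  thus ?thesis
  proof cases
    case 1
    have "D (a # v[p:=v!p]) = D (v!p # v[p:=a])" by (rule R[of a "v!p" v p]) (use 1 vp vw True p in simp_all)
    thus ?thesis by simp
  next
    case 2 thus ?thesis by simp
  next
    case 3
    have "D (v!p # v[p:=a]) = D (a # v[p:=v!p])" by (rule R[of "v!p" a v p]) (use 3 vw True p in simp_all)
    thus ?thesis by simp
  qed
next
  case False
  have "a#v \<notin> words {..<d} (Suc n)" using False by (auto simp: words_def)
  moreover have "v!p # v[p:=a] \<notin> words {..<d} (Suc n)"
  proof
    assume "v!p # v[p:=a] \<in> words {..<d} (Suc n)"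
    hence l: "length v = n" and s: "v!p < d" "set (v[p:=a]) \<subseteq> {..<d}" by (auto simp: words_def)
    have "a \<in> set (v[p:=a])" using p by (simp add: set_update_memI)
    hence "a < d" using s(2) by blast
    moreover have "set v \<subseteq> {..<d}"
    proof
      fix x assume "x \<in> set v"
      then obtain k where k: "k < length v" "x = v!k" by (metis in_set_conv_nth)
      show "x \<in> {..<d}"
      proof (cases "k = p")
        case True thus ?thesis using k s by simp
      next
        case False
        hence "v[p:=a]!k = x" using k by simp
        moreover have "v[p:=a]!k \<in> set (v[p:=a])" using k by (intro nth_mem) simp
        ultimately show ?thesis using s(2) by auto
      qed
    qed
    ultimately show False using False l by simp
  qed
  ultimately show ?thesis using Z by simp
qed

lemma tail_swap:
  assumes H: "\<And>a v p. p < length v \<Longrightarrow> D (a#v) = D (v!p # v[p:=a])"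
  and ij: "i < length v" "j < length v" "i \<noteq> j"
  shows "D (a # v[i:=v!j, j:=v!i]) = D (a#v)"
proof -
  define u where "u = (v[i:=a])[j:=v!i]"
  have "D (a#v) = D (v!i # v[i:=a])" using H[of i v a] ij by simp
  also have "\<dots> = D (v!j # u)" using H[of j "v[i:=a]" "v!i"] ij by (simp add: u_def)
  also have "\<dots> = D (a # u[i:=v!j])" using H[of i u "v!j"] ij by (simp add: u_def)
  also have "u[i:=v!j] = v[i:=v!j, j:=v!i]" using ij
    by (simp add: u_def list_update_swap)
  finally show ?thesis by simp
qed

lemma pl_transpose:
  assumes "x < length w" "y < length w"
  shows "permute_list (Transposition.transpose x y) w = w[x := w!y, y := w!x]"
  using assms by (intro nth_equalityI) (auto simp: permute_list_def transpose_def nth_list_update)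

lemma full_swap:
  assumes H: "\<And>a v p. p < length v \<Longrightarrow> D (a#v) = D (v!p # v[p:=a])"
  and xy: "x < length w" "y < length w"
  shows "D (permute_list (Transposition.transpose x y) w) = D w"
proof -
  have key: "D (w[x := w!y, y := w!x]) = D w" if xy: "x < length w" "y < length w" "x < y" for x y w
  proof -
    obtain a v where w: "w = a # v" using xy by (cases w) auto
    obtain y' where y': "y = Suc y'" using xy by (cases y) auto
    show ?thesis
    proof (cases x)
      case 0 thus ?thesis using H[of y' v a] xy w y' by simp
    next
      case (Suc x')
      thus ?thesis using tail_swap[OF H, of x' v y' a] xy w y' by simp
    qed
  qed
  consider "x < y" | "x = y" | "y < x" by (cases x y rule: linorder_cases) auto
  thus ?thesis
  proof cases
    case 1 thus ?thesis using key xy by (simp add: pl_transpose)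
  next
    case 2 thus ?thesis by simp
  next
    case 3 thus ?thesis using key[of y w x] xy by (simp add: pl_transpose list_update_swap)
  qed
qed



lemma sum_perm_reindex_left:
  assumes s: "\<sigma> permutes {..<N}"
  shows "(\<Sum>\<tau>\<in>{\<tau>. \<tau> permutes {..<N}}. f (\<sigma> \<circ> \<tau>)) = (\<Sum>\<tau>\<in>{\<tau>. \<tau> permutes {..<N}}. f \<tau>)"
proof (rule sum.reindex_bij_witness[where i="\<lambda>\<tau>. inv \<sigma> \<circ> \<tau>" and j="\<lambda>\<tau>. \<sigma> \<circ> \<tau>"])
  have a: "inv \<sigma> \<circ> \<sigma> = id" "\<sigma> \<circ> inv \<sigma> = id"
    using s permutes_inv_o by auto
  fix \<tau> assume t: "\<tau> \<in> {\<tau>. \<tau> permutes {..<N}}"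
  show "inv \<sigma> \<circ> (\<sigma> \<circ> \<tau>) = \<tau>" using a by (simp add: o_assoc)
  show "\<sigma> \<circ> (inv \<sigma> \<circ> \<tau>) = \<tau>" using a by (simp add: o_assoc)
  show "\<sigma> \<circ> \<tau> \<in> {\<tau>. \<tau> permutes {..<N}}" using t s by (simp add: permutes_compose)
  show "inv \<sigma> \<circ> \<tau> \<in> {\<tau>. \<tau> permutes {..<N}}" using t s by (simp add: permutes_compose permutes_inv)
qed simp

lemma row_single: "row_group [N] = {p. p permutes {..<N}}"
proof -
  have r: "rowof [N] x = 0" if "x < N" for x
    unfolding rowof_def using that by (intro Least_eq_0) simp
  show ?thesis unfolding row_group_def
    using r permutes_in_image by fastforce
qed

lemma col_single: "col_group [N] = {id}"
proof -
  have c: "colof [N] x = x" if "x < N" for x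
  proof -
    have "rowof [N] x = 0" unfolding rowof_def using that by (intro Least_eq_0) simp
    thus ?thesis by (simp add: colof_def)
  qed
  have "q = id" if "q \<in> col_group [N]" for q
  proof
    fix x
    have qp: "q permutes {..<N}" using that by (simp add: col_group_def)
    show "q x = id x"
    proof (cases "x < N")
      case True
      hence "colof [N] (q x) = colof [N] x" using that by (simp add: col_group_def)
      moreover have "q x < N" using qp True permutes_in_image by fastforce
      ultimately show ?thesis using c True by simp
    next
      case False thus ?thesis using qp permutes_not_in by fastforce
    qed
  qed
  moreover have "id \<in> col_group [N]" by (simp add: col_group_def permutes_id)
  ultimately show ?thesis by blast
qed

lemma young_single:
  "young_sym [N] Y w = (\<Sum>p\<in>{p. p permutes {..<N}}. Y (permute_list p w))"
  unfolding young_sym_def row_single col_single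
  by (simp add: pact_pl)

lemma sym_in_schur:
  fixes S :: "'b list \<Rightarrow> 'k::field_char_0"
  assumes St: "S \<in> tensors B N"
  and Ss: "\<And>w \<tau>. length w = N \<Longrightarrow> \<tau> permutes {..<N} \<Longrightarrow> S (permute_list \<tau> w) = S w"
  shows "S \<in> schur B [N]"
proof -
  define X where "X = smul (inverse (of_nat (fact N))) S"
  have Xt: "X \<in> tensors B N" using St by (simp add: tensors_def X_def smul_def)
  have cardP: "card {p. p permutes {..<N}} = fact N" by (simp add: card_permutations)
  have "young_sym [N] X = S"
  proof
    fix w
    show "young_sym [N] X w = S w"
    proof (cases "length w = N")
      case True
      have "young_sym [N] X w = (\<Sum>p\<in>{p. p permutes {..<N}}. inverse (of_nat (fact N)) * S w)"
        unfolding young_single X_def smul_def using True Ss by (intro sum.cong) auto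
      also have "\<dots> = S w" using cardP by simp
      finally show ?thesis .
    next
      case False
      have "young_sym [N] X w = (\<Sum>p\<in>{p. p permutes {..<N}}. 0)"
        unfolding young_single using False Xt by (intro sum.cong) (auto simp: tensors_def words_def)
      also have "\<dots> = S w" using False St by (simp add: tensors_def words_def)
      finally show ?thesis .
    qed
  qed
  thus ?thesis using Xt unfolding schur_def by (metis sum_list.Cons sum_list.Nil add_0_right image_eqI)
qed

lemma schur_single_sym:
  fixes Y :: "'b list \<Rightarrow> 'k::comm_ring_1"
  assumes "Y \<in> schur B [N]"
  shows "Y \<in> tensors B N"
    and "\<And>w \<tau>. length w = N \<Longrightarrow> \<tau> permutes {..<N} \<Longrightarrow> Y (permute_list \<tau> w) = Y w"
proof -
  obtain X where Xt: "X \<in> tensors B N" and Y: "Y = young_sym [N] X"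
    using assms by (auto simp: schur_def)
  show "Y \<in> tensors B N"
    unfolding tensors_def
  proof (intro CollectI allI impI)
    fix w assume w: "w \<notin> words B N"
    have "X (permute_list p w) = 0" if "p permutes {..<N}" for p
    proof (cases "length w = N")
      case True
      hence "set (permute_list p w) = set w" using that by simp
      thus ?thesis using w Xt True by (auto simp: tensors_def words_def)
    next
      case False thus ?thesis using Xt by (auto simp: tensors_def words_def)
    qed
    thus "Y w = 0" by (simp add: Y young_single)
  qed
  fix w :: "'b list" and \<tau> :: "nat \<Rightarrow> nat" assume l: "length w = N" and t: "\<tau> permutes {..<N}"
  have "Y (permute_list \<tau> w) = (\<Sum>p\<in>{p. p permutes {..<N}}. X (permute_list (\<tau> \<circ> p) w))"
    unfolding Y young_single using l by (intro sum.cong) (auto simp: permute_list_compose)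
  also have "\<dots> = Y w" unfolding Y young_single
    by (rule sum_perm_reindex_left[OF t, where f="\<lambda>p. X (permute_list p w)"])
  finally show "Y (permute_list \<tau> w) = Y w" .
qed



lemma slice_perm:
  fixes D :: "nat list \<Rightarrow> 'k"
  assumes H: "\<And>a v p. p < length v \<Longrightarrow> D (a#v) = D (v!p # v[p:=a])"
  and l: "length u = n" and t: "\<tau> permutes {..<n}"
  shows "D (a # permute_list \<tau> u) = D (a # u)"
proof -
  have "(\<lambda>u. D (a # u)) (permute_list \<tau> u) = (\<lambda>u. D (a # u)) u"
  proof (rule perm_inv[OF _ t l])
    fix w :: "nat list" and x y assume lw: "length w = n" "x < n" "y < n"
    show "D (a # permute_list (Transposition.transpose x y) w) = D (a # w)"
    proof (cases "x = y")
      case True thus ?thesis by simp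
    next
      case False thus ?thesis using lw tail_swap[OF H, of x w y a] by (simp add: pl_transpose)
    qed
  qed
  thus ?thesis by simp
qed

lemma part1:
  fixes T1 T2 :: "nat list \<Rightarrow> 'k::field_char_0"
  assumes P: "is_partition lam" and L: "2 \<le> length lam"
  and T1: "T1 \<in> VtensS d lam" and T2: "T2 \<in> VtensS d lam" and eq: "ad d T1 = ad d T2"
  shows "T1 = T2"
proof -
  define n where "n = sum_list lam"
  define D where "D = (\<lambda>w. T1 w - T2 w)"
  have Z: "\<forall>w. w \<notin> words {..<d} (Suc n) \<longrightarrow> D w = 0"
    using T1 T2 by (auto simp: VtensS_def tensors_def D_def n_def)
  have R: "D (i # v[p:=j]) = D (j # v[p:=i])"
    if "i<j" "j<d" "v \<in> words {..<d} n" "p<n" for i j v p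
  proof -
    have "ad d T1 ((map LV v)[p := LW i j]) = ad d T2 ((map LV v)[p := LW i j])" using eq by simp
    hence "T1 (i # v[p:=j]) - T1 (j # v[p:=i]) = T2 (i # v[p:=j]) - T2 (j # v[p:=i])"
      using ad_special[OF that, where T=T1] ad_special[OF that, where T=T2] by simp
    thus ?thesis by (simp add: D_def algebra_simps)
  qed
  have H: "D (a#v) = D (v!p # v[p:=a])" if "p < length v" for a v p
    by (rule rel_ext[OF Z R that])
  have D0: "D (a # u) = 0" if "length u = n" "a < d" for a u
  proof -
    have "slice T1 a \<in> schur {..<d} lam" using T1 that by (simp add: VtensS_def)
    then obtain X1 where X1: "slice T1 a = young_sym lam X1" by (auto simp: schur_def)
    have "slice T2 a \<in> schur {..<d} lam" using T2 that by (simp add: VtensS_def)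
    then obtain X2 where X2: "slice T2 a = young_sym lam X2" by (auto simp: schur_def)
    have "of_nat (fact n) * D (a # u) = (\<Sum>\<tau>\<in>{\<tau>. \<tau> permutes {..<n}}. D (a # u))"
      by (simp add: card_permutations)
    also have "\<dots> = (\<Sum>\<tau>\<in>{\<tau>. \<tau> permutes {..<n}}. D (a # permute_list \<tau> u))"
      using slice_perm[OF H that(1)] by (intro sum.cong) auto
    also have "\<dots> = (\<Sum>\<tau>\<in>{\<tau>. \<tau> permutes {..<n}}. young_sym lam X1 (permute_list \<tau> u))
                  - (\<Sum>\<tau>\<in>{\<tau>. \<tau> permutes {..<n}}. young_sym lam X2 (permute_list \<tau> u))"
      unfolding sum_subtractf[symmetric] D_def
      by (intro sum.cong refl) (metis X1 X2 slice_def)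
    also have "\<dots> = 0" using young_sum_zero[OF P L, of u X1] young_sum_zero[OF P L, of u X2] that(1) by (simp add: n_def)
    finally show ?thesis by simp
  qed
  have "D w = 0" for w
  proof (cases w)
    case Nil thus ?thesis using Z by (simp add: words_def)
  next
    case (Cons a u)
    show ?thesis
    proof (cases "length u = n \<and> a < d")
      case True thus ?thesis using D0 Cons by simp
    next
      case False thus ?thesis using Z Cons by (auto simp: words_def)
    qed
  qed
  thus ?thesis by (auto simp: D_def fun_eq_iff)
qed



lemma ker_sub:
  fixes T :: "nat list \<Rightarrow> 'k::field_char_0"
  assumes T: "T \<in> VtensS d [n]" and z: "ad d T = (\<lambda>_. 0)"
  shows "T \<in> schur {..<d} [n+1]"
proof -
  have Tt: "T \<in> tensors {..<d} (Suc n)" using T by (simp add: VtensS_def)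
  have Z: "\<forall>w. w \<notin> words {..<d} (Suc n) \<longrightarrow> T w = 0" using Tt by (simp add: tensors_def)
  have R: "T (i # v[p:=j]) = T (j # v[p:=i])"
    if "i<j" "j<d" "v \<in> words {..<d} n" "p<n" for i j v p
    using ad_special[OF that, where T=T] z by (simp add: fun_eq_iff)
  have H: "T (a#v) = T (v!p # v[p:=a])" if "p < length v" for a v p
    by (rule rel_ext[OF Z R that])
  have tr: "T (permute_list (Transposition.transpose a b) w) = T w"
    if "length w = Suc n" "a < Suc n" "b < Suc n" for w a b
    using full_swap[OF H, of a w b] that by simp
  have "T \<in> schur {..<d} [Suc n]"
  proof (rule sym_in_schur[OF Tt])
    fix w :: "nat list" and \<tau> assume l: "length w = Suc n" and t: "\<tau> permutes {..<Suc n}"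
    show "T (permute_list \<tau> w) = T w" by (rule perm_inv[OF tr t l])
  qed
  thus ?thesis by simp
qed

lemma schur_sub:
  fixes T :: "nat list \<Rightarrow> 'k::field_char_0"
  assumes T: "T \<in> schur {..<d} [n+1]"
  shows "T \<in> VtensS d [n]" and "ad d T = (\<lambda>_. 0)"
proof -
  have Tt: "T \<in> tensors {..<d} (Suc n)" using schur_single_sym(1)[of T "{..<d}" "Suc n"] T by simp
  have Ts: "T (permute_list \<tau> w) = T w" if "length w = Suc n" "\<tau> permutes {..<Suc n}" for w \<tau>
    using schur_single_sym(2)[of T "{..<d}" "Suc n"] T that by simp
  have sw: "T (j # v[q:=i]) = T (i # v[q:=j])" if q: "q < length v" for i j v q
  proof (cases "length v = n")
    case True
    have "permute_list (Transposition.transpose 0 (Suc q)) (i # v[q:=j]) = j # v[q:=i]"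
      using q by (simp add: pl_transpose)
    moreover have "Transposition.transpose 0 (Suc q) permutes {..<Suc n}"
      using q True by (intro permutes_swap_id) auto
    hence "T (permute_list (Transposition.transpose 0 (Suc q)) (i # v[q:=j])) = T (i # v[q:=j])"
      using True by (intro Ts) auto
    ultimately show ?thesis by simp
  next
    case False
    thus ?thesis using Tt by (simp add: tensors_def words_def)
  qed
  show "T \<in> VtensS d [n]"
    unfolding VtensS_def
  proof (intro CollectI conjI allI impI)
    show "T \<in> tensors {..<d} (Suc (sum_list [n]))" using Tt by simp
    fix a assume a: "a < d"
    show "slice T a \<in> schur {..<d} [n]"
    proof (rule sym_in_schur)
      show "slice T a \<in> tensors {..<d} n"
        using Tt a by (auto simp: tensors_def words_def slice_def)
      fix w :: "nat list" and \<tau> assume l: "length w = n" and t: "\<tau> permutes {..<n}"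
      have H: "T (b#v) = T (v!p # v[p:=b])" if "p < length v" for b v p
        using sw[OF that, of "v!p" b] that by simp
      show "slice T a (permute_list \<tau> w) = slice T a w"
        unfolding slice_def by (rule slice_perm[OF H l t])
    qed
  qed
  show "ad d T = (\<lambda>_. 0)"
  proof
    fix w
    show "ad d T w = 0"
    proof (cases "w \<in> words (Lbasis d) (length w)")
      case False thus ?thesis by (simp add: ad_expand)
    next
      case True
      have "inner d T w q = 0" if q: "q < length w" for q
      proof (cases "w!q")
        case (LV k) thus ?thesis by (rule inner_LV)
      next
        case (LW i j)
        have "w!q \<in> Lbasis d" using True q by (auto simp: words_def)
        hence ij: "i < j" "j < d" using LW by (auto simp: Lbasis_def)
        have "inner d T w q = emb (slice T i) (w[q:=LV j]) - emb (slice T j) (w[q:=LV i])"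
          using inner_LW[OF LW] ij by simp
        also have "\<dots> = 0"
          using q sw[of q "map unLV w" j i] by (simp add: emb_update slice_def, blast)
        finally show ?thesis .
      qed
      thus ?thesis using True by (simp add: ad_expand)
    qed
  qed
qed

lemma part2:
  "{T \<in> VtensS d [n]. ad d T = (\<lambda>_. 0)} = (schur {..<d} [n+1] :: (nat list \<Rightarrow> 'k::field_char_0) set)"
  using ker_sub schur_sub by blast

theorem mainTheorem15:
  fixes d :: nat and lam :: "nat list"
  assumes "is_partition lam"
  shows "(2 \<le> length lam \<longrightarrow>
            inj_on (ad d) (VtensS d lam :: (nat list \<Rightarrow> 'k::field_char_0) set))
       \<and> (\<forall>n\<ge>1. lam = [n] \<longrightarrow>
            (\<exists>f. linear_on {T \<in> VtensS d lam. ad d T = (\<lambda>_. 0)} f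
               \<and> bij_betw f {T \<in> VtensS d lam. ad d T = (\<lambda>_. 0)}
                   (schur {..<d} [n + 1] :: (nat list \<Rightarrow> 'k) set)
               \<and> (\<forall>g\<in>GLm d. \<forall>T\<in>{T \<in> VtensS d lam. ad d T = (\<lambda>_. 0)}.
                     f (gl_act d g T) = gl_act d g (f T))))"
proof (intro conjI impI allI)
  assume "2 \<le> length lam"
  thus "inj_on (ad d) (VtensS d lam :: (nat list \<Rightarrow> 'k::field_char_0) set)"
    using part1[OF assms] by (intro inj_onI) blast
next
  fix n :: nat assume "1 \<le> n" "lam = [n]"
  show "\<exists>f. linear_on {T \<in> VtensS d lam. ad d T = (\<lambda>_. 0)} f
               \<and> bij_betw f {T \<in> VtensS d lam. ad d T = (\<lambda>_. 0)}
                   (schur {..<d} [n + 1] :: (nat list \<Rightarrow> 'k) set)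
               \<and> (\<forall>g\<in>GLm d. \<forall>T\<in>{T \<in> VtensS d lam. ad d T = (\<lambda>_. 0)}.
                     f (gl_act d g T) = gl_act d g (f T))"
    by (rule exI[of _ id]) (simp add: \<open>lam = [n]\<close> part2 linear_on_def bij_betw_id)
qed


end
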